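(* Let $X$, $(Y,d_Y)$, $(Z,d_Z)$ be Polish (metric) spaces, let $M$ be a compact Hausdorff space, and let $P: X \rightsquigarrow Y$, $Q: Y \rightsquigarrow Z$ be tight Feller kernels with all values in $\mathcal{P}_1$. Assume $W_1(Q(y), Q(y')) \le L\, d_Y(y,y')$ for all $y,y' \in Y$. Then for any $\delta, \epsilon \ge 0$ and any closed $S \subseteq Z \times M$, $$P^{*,\delta}_W(Q^{*,\epsilon}_W S) \subseteq (Q \circ P)^{*,L\delta+\epsilon}_W S.$$
   Context: Tight Feller kernels as usual ($P(x,\cdot)$ Borel probability measures; Feller: $x \mapsto \int\phi\,dP(x,\cdot)$ continuous for bounded continuous $\phi$; tight: uniform compact concentration over compact input sets); $(Q\circ P)(x,C) = \int Q(y,C)\,P(x,dy)$. $\mathcal{P}_1(Y)$ is the set of Borel probability measures with finite first moment; $W_1(\mu,\nu) = \inf_{\pi \in \Pi(\mu,\nu)} \int d(y,y')\,d\pi$ over couplings. For closed $A \subseteq Y$, $\mathcal{P}_A = \{\nu \in \mathcal{P}_1(Y) : \mathrm{supp}(\nu) \subseteq A\}$ and $W_1(\mu, \mathcal{P}_A) = \inf_{\nu \in \mathcal{P}_A} W_1(\mu,\nu)$. For a kernel $P: X \rightsquigarrow Y$ and relation $S \subseteq Y \times M$, the Wasserstein pullback is $P^{*,\epsilon}_W S = \{(x,m) \in X \times M : W_1(P(x), \mathcal{P}_{S_m}) \le \epsilon\}$, $S_m = \{y : (y,m) \in S\}$. *)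

theory Defs
  imports "HOL-Probability.Probability"
begin

definition borel_prob :: "'a::topological_space measure \<Rightarrow> bool" where
  "borel_prob \<mu> \<longleftrightarrow> sets \<mu> = sets borel \<and> prob_space \<mu>"

definition finite_first_moment :: "'a::metric_space measure \<Rightarrow> bool" where
  "finite_first_moment \<mu> \<longleftrightarrow> (\<exists>y0. (\<integral>\<^sup>+ y. ennreal (dist y y0) \<partial>\<mu>) < \<infinity>)"

definition P1 :: "'a::metric_space measure set" where
  "P1 = {\<mu>. borel_prob \<mu> \<and> finite_first_moment \<mu>}"

definition couplings :: "'a::metric_space measure \<Rightarrow> 'a measure \<Rightarrow> ('a \<times> 'a) measure set" where
  "couplings \<mu> \<nu> = {\<pi>. borel_prob \<pi> \<and> distr \<pi> borel fst = \<mu> \<and> distr \<pi> borel snd = \<nu>}"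

definition W1 :: "'a::metric_space measure \<Rightarrow> 'a measure \<Rightarrow> ennreal" where
  "W1 \<mu> \<nu> = (INF \<pi>\<in>couplings \<mu> \<nu>. \<integral>\<^sup>+ p. ennreal (dist (fst p) (snd p)) \<partial>\<pi>)"

definition msupp :: "'a::topological_space measure \<Rightarrow> 'a set" where
  "msupp \<nu> = {y. \<forall>U. open U \<and> y \<in> U \<longrightarrow> emeasure \<nu> U > 0}"

definition PA :: "'a::metric_space set \<Rightarrow> 'a measure set" where
  "PA A = {\<nu>\<in>P1. msupp \<nu> \<subseteq> A}"

definition W1_set :: "'a::metric_space measure \<Rightarrow> 'a measure set \<Rightarrow> ennreal" where
  "W1_set \<mu> N = (INF \<nu>\<in>N. W1 \<mu> \<nu>)"

definition rel_section :: "('y \<times> 'm) set \<Rightarrow> 'm \<Rightarrow> 'y set" where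
  "rel_section S m = {y. (y, m) \<in> S}"

definition wpullback :: "('x \<Rightarrow> 'y::metric_space measure) \<Rightarrow> real \<Rightarrow> ('y \<times> 'm) set \<Rightarrow> ('x \<times> 'm) set" where
  "wpullback P \<epsilon> S = {(x, m). W1_set (P x) (PA (rel_section S m)) \<le> ennreal \<epsilon>}"

definition markov_kernel :: "('x \<Rightarrow> 'y::topological_space measure) \<Rightarrow> bool" where
  "markov_kernel P \<longleftrightarrow> (\<forall>x. borel_prob (P x))"

definition feller :: "('x::topological_space \<Rightarrow> 'y::topological_space measure) \<Rightarrow> bool" where
  "feller P \<longleftrightarrow> (\<forall>\<phi>::'y \<Rightarrow> real. continuous_on UNIV \<phi> \<and> bounded (range \<phi>) \<longrightarrow>
      continuous_on UNIV (\<lambda>x. \<integral>y. \<phi> y \<partial>P x))"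

definition tight_kernel :: "('x::topological_space \<Rightarrow> 'y::topological_space measure) \<Rightarrow> bool" where
  "tight_kernel P \<longleftrightarrow> (\<forall>K e. compact K \<and> e > 0 \<longrightarrow>
      (\<exists>C. compact C \<and> (\<forall>x\<in>K. measure (P x) (UNIV - C) \<le> e)))"

definition kcomp :: "('y::topological_space \<Rightarrow> 'z::topological_space measure) \<Rightarrow> ('x \<Rightarrow> 'y measure) \<Rightarrow> 'x \<Rightarrow> 'z measure" where
  "kcomp Q P x = measure_of UNIV (sets borel) (\<lambda>C. \<integral>\<^sup>+ y. emeasure (Q y) C \<partial>P x)"

end

theory Submission
  imports Defs
begin

lemma msupp_AE:
  fixes \<nu> :: "'a::{metric_space,second_countable_topology} measure"
  assumes "borel_prob \<nu>"
  shows "AE y in \<nu>. y \<in> msupp \<nu>"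
proof -
  have sets: "sets \<nu> = sets borel" using assms by (simp add: borel_prob_def)
  define F where "F = {U::'a set. open U \<and> emeasure \<nu> U = 0}"
  have eq: "- msupp \<nu> = \<Union>F"
    by (auto simp: msupp_def F_def not_less)
  obtain F' where F': "F' \<subseteq> F" "countable F'" "\<Union>F' = \<Union>F"
    using Lindelof[of F] unfolding F_def by blast
  have "\<Union>F' \<in> null_sets \<nu>"
    using F' by (intro null_sets_UN'[where I=F' and N="\<lambda>U. U", simplified]) (auto simp: F_def null_sets_def sets)
  then have "- msupp \<nu> \<in> null_sets \<nu>" using eq F' by simp
  then show ?thesis
    by (intro AE_I[of _ _ "- msupp \<nu>"]) auto
qed

lemma meas_fst: "(fst :: ('a::{metric_space,second_countable_topology} \<times> 'a) \<Rightarrow> 'a) \<in> borel_measurable borel"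
  by (intro borel_measurable_continuous_onI continuous_intros)
lemma meas_snd: "(snd :: ('a::{metric_space,second_countable_topology} \<times> 'a) \<Rightarrow> 'a) \<in> borel_measurable borel"
  by (intro borel_measurable_continuous_onI continuous_intros)
lemma meas_dist: "(\<lambda>p::('a::{metric_space,second_countable_topology} \<times> 'a). dist (fst p) (snd p)) \<in> borel_measurable borel"
  by (intro borel_measurable_continuous_onI continuous_intros)

lemma coupling_lip:
  fixes f :: "'a::{metric_space,second_countable_topology} \<Rightarrow> real"
  assumes pi: "\<pi> \<in> couplings \<mu> \<nu>" and lip: "\<And>a b. f a \<le> f b + dist a b"
    and nn: "\<And>a. f a \<ge> 0" and fm: "f \<in> borel_measurable borel"
  shows "(\<integral>\<^sup>+ y. ennreal (f y) \<partial>\<mu>) \<le> (\<integral>\<^sup>+ y. ennreal (f y) \<partial>\<nu>) + (\<integral>\<^sup>+ p. ennreal (dist (fst p) (snd p)) \<partial>\<pi>)"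
proof -
  have sp: "sets \<pi> = sets borel" and mu: "\<mu> = distr \<pi> borel fst" and nu: "\<nu> = distr \<pi> borel snd"
    using pi by (auto simp: couplings_def borel_prob_def)
  have mf: "fst \<in> measurable \<pi> borel" using meas_fst measurable_cong_sets[OF sp refl] by blast
  have ms: "snd \<in> measurable \<pi> borel" using meas_snd measurable_cong_sets[OF sp refl] by blast
  have md: "(\<lambda>p. dist (fst p) (snd p)) \<in> borel_measurable \<pi>" using meas_dist measurable_cong_sets[OF sp refl] by blast
  have fe: "(\<lambda>y. ennreal (f y)) \<in> borel_measurable borel"
    using measurable_compose[OF fm measurable_ennreal] by (simp add: comp_def)
  have fe1: "(\<lambda>p. ennreal (f (snd p))) \<in> borel_measurable \<pi>"
    using measurable_compose[OF ms fe] by (simp add: comp_def)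
  have fe2: "(\<lambda>p. ennreal (dist (fst p) (snd p))) \<in> borel_measurable \<pi>"
    using measurable_compose[OF md measurable_ennreal] by (simp add: comp_def)
  have "(\<integral>\<^sup>+ y. ennreal (f y) \<partial>\<mu>) = (\<integral>\<^sup>+ p. ennreal (f (fst p)) \<partial>\<pi>)"
    unfolding mu by (rule nn_integral_distr[OF mf]) (simp add: fe)
  also have "\<dots> \<le> (\<integral>\<^sup>+ p. ennreal (f (snd p)) + ennreal (dist (fst p) (snd p)) \<partial>\<pi>)"
  proof (intro nn_integral_mono)
    fix p :: "'a \<times> 'a"
    have "ennreal (f (fst p)) \<le> ennreal (f (snd p) + dist (fst p) (snd p))" by (rule ennreal_leI) (rule lip)
    also have "\<dots> = ennreal (f (snd p)) + ennreal (dist (fst p) (snd p))" by (rule ennreal_plus[OF nn zero_le_dist])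
    finally show "ennreal (f (fst p)) \<le> ennreal (f (snd p)) + ennreal (dist (fst p) (snd p))" .
  qed
  also have "\<dots> = (\<integral>\<^sup>+ p. ennreal (f (snd p)) \<partial>\<pi>) + (\<integral>\<^sup>+ p. ennreal (dist (fst p) (snd p)) \<partial>\<pi>)"
    by (rule nn_integral_add[OF fe1 fe2])
  also have "(\<integral>\<^sup>+ p. ennreal (f (snd p)) \<partial>\<pi>) = (\<integral>\<^sup>+ y. ennreal (f y) \<partial>\<nu>)"
    unfolding nu by (rule nn_integral_distr[OF ms, symmetric]) (simp add: fe)
  finally show ?thesis .
qed

lemma W1_lip:
  fixes f :: "'a::{metric_space,second_countable_topology} \<Rightarrow> real"
  assumes lip: "\<And>a b. f a \<le> f b + dist a b"
    and nn: "\<And>a. f a \<ge> 0" and fm: "f \<in> borel_measurable borel"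
  shows "(\<integral>\<^sup>+ y. ennreal (f y) \<partial>\<mu>) \<le> (\<integral>\<^sup>+ y. ennreal (f y) \<partial>\<nu>) + W1 \<mu> \<nu>"
proof (cases "W1 \<mu> \<nu> = \<infinity>")
  case True then show ?thesis by simp
next
  case False
  show ?thesis
  proof (rule ennreal_le_epsilon)
    fix e :: real assume e: "0 < e"
    obtain \<pi> where pi: "\<pi> \<in> couplings \<mu> \<nu>" and lt: "(\<integral>\<^sup>+ p. ennreal (dist (fst p) (snd p)) \<partial>\<pi>) < W1 \<mu> \<nu> + e"
      using INF_approx_ennreal[OF e W1_def False] by blast
    have "(\<integral>\<^sup>+ y. ennreal (f y) \<partial>\<mu>) \<le> (\<integral>\<^sup>+ y. ennreal (f y) \<partial>\<nu>) + (\<integral>\<^sup>+ p. ennreal (dist (fst p) (snd p)) \<partial>\<pi>)"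
      by (rule coupling_lip[OF pi lip nn fm])
    also have "\<dots> \<le> (\<integral>\<^sup>+ y. ennreal (f y) \<partial>\<nu>) + (W1 \<mu> \<nu> + e)"
      using lt by (intro add_left_mono) simp
    finally show "(\<integral>\<^sup>+ y. ennreal (f y) \<partial>\<mu>) \<le> (\<integral>\<^sup>+ y. ennreal (f y) \<partial>\<nu>) + W1 \<mu> \<nu> + ennreal e"
      by (simp add: add.assoc)
  qed
qed

lemma W1_LB:
  fixes \<mu> :: "'a::{metric_space,second_countable_topology} measure"
  assumes nuA: "\<nu> \<in> PA A"
  shows "(\<integral>\<^sup>+ y. ennreal (infdist y A) \<partial>\<mu>) \<le> W1 \<mu> \<nu>"
  unfolding W1_def
proof (rule INF_greatest)
  fix \<pi> assume pi: "\<pi> \<in> couplings \<mu> \<nu>"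
  have sp: "sets \<pi> = sets borel" and mu: "\<mu> = distr \<pi> borel fst" and nu: "\<nu> = distr \<pi> borel snd"
    using pi by (auto simp: couplings_def borel_prob_def)
  have bp: "borel_prob \<nu>" and sub: "msupp \<nu> \<subseteq> A" using nuA by (auto simp: PA_def P1_def)
  have mf: "fst \<in> measurable \<pi> borel" using meas_fst measurable_cong_sets[OF sp refl] by blast
  have ms: "snd \<in> measurable \<pi> borel" using meas_snd measurable_cong_sets[OF sp refl] by blast
  have mi: "(\<lambda>y. infdist y A) \<in> borel_measurable borel"
    by (intro borel_measurable_continuous_onI continuous_intros)
  define S where "S = msupp \<nu>"
  have ae0: "AE y in \<nu>. y \<in> S" unfolding S_def by (rule msupp_AE[OF bp])
  have "AE y in distr \<pi> borel snd. y \<in> S" using ae0 unfolding nu .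
  then have ae: "AE p in \<pi>. snd p \<in> msupp \<nu>"
    unfolding S_def by (rule AE_distrD[OF ms])
  have "(\<integral>\<^sup>+ y. ennreal (infdist y A) \<partial>\<mu>) = (\<integral>\<^sup>+ p. ennreal (infdist (fst p) A) \<partial>\<pi>)"
    unfolding mu by (rule nn_integral_distr[OF mf]) (use measurable_compose[OF mi measurable_ennreal] in \<open>simp add: comp_def\<close>)
  also have "\<dots> \<le> (\<integral>\<^sup>+ p. ennreal (dist (fst p) (snd p)) \<partial>\<pi>)"
    using ae by (intro nn_integral_mono_AE) (auto intro!: infdist_le dest: subsetD[OF sub])
  finally show "(\<integral>\<^sup>+ y. ennreal (infdist y A) \<partial>\<mu>) \<le> (\<integral>\<^sup>+ p. ennreal (dist (fst p) (snd p)) \<partial>\<pi>)" .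
qed

lemma W1_set_LB:
  fixes \<mu> :: "'a::{metric_space,second_countable_topology} measure"
  shows "(\<integral>\<^sup>+ y. ennreal (infdist y A) \<partial>\<mu>) \<le> W1_set \<mu> (PA A)"
  unfolding W1_set_def by (rule INF_greatest) (rule W1_LB)


lemma approx_point:
  fixes C :: "'a::metric_space set"
  assumes C: "C \<subseteq> closure D" "C \<noteq> {}" and e: "e > 0"
  shows "\<exists>d\<in>D. dist z d < infdist z C + e"
proof -
  have "\<exists>y\<in>C. dist z y < infdist z C + e/2"
  proof (rule ccontr)
    assume "\<not> ?thesis"
    then have "\<forall>y\<in>C. infdist z C + e/2 \<le> dist z y" by auto
    then have "infdist z C + e/2 \<le> (INF a\<in>C. dist z a)" by (intro cINF_greatest C(2)) auto
    then show False using e infdist_notempty[OF C(2), of z] by simp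
  qed
  then obtain y where y: "y \<in> C" "dist z y < infdist z C + e/2" by blast
  then have "y \<in> closure D" using C by auto
  moreover have "e/2 > 0" using e by simp
  ultimately obtain d where d: "d \<in> D" "dist d y < e/2" unfolding closure_approachable by blast
  have "dist z d \<le> dist z y + dist d y" using dist_triangle[of z d y] dist_commute[of y d] by simp
  then have "dist z d < infdist z C + e" using y d by linarith
  then show ?thesis using d by blast
qed

lemma W1_UB:
  fixes \<mu> :: "'a::polish_space measure"
  assumes mu: "\<mu> \<in> P1" and C: "closed C" "C \<noteq> {}" and e: "e > 0"
  shows "W1_set \<mu> (PA C) \<le> (\<integral>\<^sup>+ z. ennreal (infdist z C) \<partial>\<mu>) + ennreal e"
proof -
  have smu: "sets \<mu> = sets borel" and pmu: "prob_space \<mu>"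
    using mu by (auto simp: P1_def borel_prob_def)
  obtain y0 where y0: "(\<integral>\<^sup>+ y. ennreal (dist y y0) \<partial>\<mu>) < \<infinity>"
    using mu by (auto simp: P1_def finite_first_moment_def)
  obtain D where D: "countable D" "D \<subseteq> C" "C \<subseteq> closure D" using separable[of C] by blast
  have Dne: "D \<noteq> {}" using D C by auto
  define c where "c = from_nat_into D"
  have rc: "range c = D" unfolding c_def using D Dne by simp
  have ex: "\<exists>n. dist z (c n) < infdist z C + e" for z
    using approx_point[OF D(3) C(2) e, of z] rc by auto
  define N where "N z = (LEAST n. dist z (c n) < infdist z C + e)" for z
  define T where "T z = c (N z)" for z
  have hT: "dist z (T z) < infdist z C + e" for z
    unfolding T_def N_def using LeastI_ex[OF ex[of z]] .
  have TC: "T z \<in> C" for z unfolding T_def using rc D by auto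
  have [measurable]: "(\<lambda>z. infdist z C) \<in> borel_measurable borel"
    by (intro borel_measurable_continuous_onI continuous_intros)
  have Nm: "N \<in> measurable borel (count_space UNIV)"
    unfolding N_def by measurable
  have Tm: "T \<in> borel_measurable borel"
    unfolding T_def[abs_def] by (rule measurable_compose[OF Nm]) simp
  have Tm': "T \<in> measurable \<mu> borel" using Tm measurable_cong_sets[OF smu refl] by blast
  have idm: "(\<lambda>z. z) \<in> measurable \<mu> borel" using smu by (simp add: measurable_ident_sets)
  have pm: "(\<lambda>z. (z, T z)) \<in> measurable \<mu> borel"
    using measurable_Pair[OF idm Tm'] by (simp add: borel_prod)
  define \<nu> where "\<nu> = distr \<mu> borel T"
  define \<pi> where "\<pi> = distr \<mu> borel (\<lambda>z. (z, T z))"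
  have pi: "\<pi> \<in> couplings \<mu> \<nu>"
  proof -
    have "borel_prob \<pi>" unfolding \<pi>_def borel_prob_def
      using prob_space.prob_space_distr[OF pmu pm] by simp
    moreover have "distr \<pi> borel fst = \<mu>"
      unfolding \<pi>_def by (subst distr_distr[OF meas_fst pm]) (simp add: comp_def distr_id2 smu)
    moreover have "distr \<pi> borel snd = \<nu>"
      unfolding \<pi>_def \<nu>_def by (subst distr_distr[OF meas_snd pm]) (simp add: comp_def)
    ultimately show ?thesis by (simp add: couplings_def)
  qed
  have fin: "finite_first_moment \<nu>"
  proof -
    obtain c0 where c0: "c0 \<in> C" using C by auto
    have "(\<integral>\<^sup>+ y. ennreal (dist y y0) \<partial>\<nu>) = (\<integral>\<^sup>+ z. ennreal (dist (T z) y0) \<partial>\<mu>)"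
      unfolding \<nu>_def by (rule nn_integral_distr[OF Tm']) measurable
    also have "\<dots> \<le> (\<integral>\<^sup>+ z. 2 * ennreal (dist z y0) + ennreal (dist y0 c0 + e) \<partial>\<mu>)"
    proof (intro nn_integral_mono)
      fix z
      have "infdist z C \<le> dist z c0" by (rule infdist_le[OF c0])
      moreover have "dist z c0 \<le> dist z y0 + dist y0 c0" by (rule dist_triangle)
      moreover have "dist (T z) y0 \<le> dist z (T z) + dist z y0" by (metis dist_commute dist_triangle)
      ultimately have "dist (T z) y0 \<le> 2 * dist z y0 + (dist y0 c0 + e)" using hT[of z] by linarith
      then have "ennreal (dist (T z) y0) \<le> ennreal (2 * dist z y0 + (dist y0 c0 + e))" by (rule ennreal_leI)
      also have "\<dots> = 2 * ennreal (dist z y0) + ennreal (dist y0 c0 + e)"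
        using e by (simp add: ennreal_plus ennreal_mult)
      finally show "ennreal (dist (T z) y0) \<le> 2 * ennreal (dist z y0) + ennreal (dist y0 c0 + e)" .
    qed
    also have "\<dots> = 2 * (\<integral>\<^sup>+ z. ennreal (dist z y0) \<partial>\<mu>) + ennreal (dist y0 c0 + e) * emeasure \<mu> (space \<mu>)"
    proof -
      have d0: "(\<lambda>z. ennreal (dist z y0)) \<in> borel_measurable borel" by measurable
      have d2[measurable]: "(\<lambda>z. ennreal (dist z y0)) \<in> borel_measurable \<mu>"
        using d0 measurable_cong_sets[OF smu refl] by blast
      have d1: "(\<lambda>z. 2 * ennreal (dist z y0)) \<in> borel_measurable \<mu>" by measurable
      show ?thesis
        by (simp add: nn_integral_add[OF d1] nn_integral_cmult[OF d2])
    qed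
    also have "\<dots> < \<infinity>" using y0 prob_space.emeasure_space_1[OF pmu]
      by (simp add: ennreal_mult_less_top)
    finally show ?thesis unfolding finite_first_moment_def by blast
  qed
  have nuPA: "\<nu> \<in> PA C"
  proof -
    have "borel_prob \<nu>" unfolding \<nu>_def borel_prob_def
      using prob_space.prob_space_distr[OF pmu Tm'] by simp
    moreover have "msupp \<nu> \<subseteq> C"
    proof
      fix y assume y: "y \<in> msupp \<nu>"
      show "y \<in> C"
      proof (rule ccontr)
        assume "y \<notin> C"
        then have "emeasure \<nu> (- C) > 0" using y C(1) by (auto simp: msupp_def)
        moreover have "emeasure \<nu> (- C) = 0"
        proof -
          have "T -` (- C) \<inter> space \<mu> = {}" using TC by auto
          then show ?thesis unfolding \<nu>_def using C(1)
            by (subst emeasure_distr[OF Tm']) (auto simp: open_Compl)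
        qed
        ultimately show False by simp
      qed
    qed
    ultimately show ?thesis using fin by (simp add: PA_def P1_def)
  qed
  have "W1_set \<mu> (PA C) \<le> W1 \<mu> \<nu>" unfolding W1_set_def using nuPA by (rule INF_lower)
  also have "\<dots> \<le> (\<integral>\<^sup>+ p. ennreal (dist (fst p) (snd p)) \<partial>\<pi>)" unfolding W1_def using pi by (rule INF_lower)
  also have "\<dots> = (\<integral>\<^sup>+ z. ennreal (dist z (T z)) \<partial>\<mu>)"
  proof -
    have m: "(\<lambda>p::'a \<times> 'a. ennreal (dist (fst p) (snd p))) \<in> borel_measurable borel" using measurable_compose[OF meas_dist measurable_ennreal] by (simp add: comp_def)
    have m': "(\<lambda>p::'a \<times> 'a. ennreal (dist (fst p) (snd p))) \<in> borel_measurable (distr \<mu> borel (\<lambda>z. (z, T z)))"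
      using m by (simp add: measurable_cong_sets[OF sets_distr refl])
    show ?thesis unfolding \<pi>_def by (simp add: nn_integral_distr[OF pm m'])
  qed
  also have "\<dots> \<le> (\<integral>\<^sup>+ z. ennreal (infdist z C) + ennreal e \<partial>\<mu>)"
  proof (intro nn_integral_mono)
    fix z
    have "ennreal (dist z (T z)) \<le> ennreal (infdist z C + e)" using hT[of z] by (intro ennreal_leI) simp
    also have "\<dots> = ennreal (infdist z C) + ennreal e" by (rule ennreal_plus[OF infdist_nonneg]) (use e in simp)
    finally show "ennreal (dist z (T z)) \<le> ennreal (infdist z C) + ennreal e" .
  qed
  also have "\<dots> = (\<integral>\<^sup>+ z. ennreal (infdist z C) \<partial>\<mu>) + ennreal e"
  proof -
    have mi0: "(\<lambda>z. ennreal (infdist z C)) \<in> borel_measurable borel" by measurable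
    have mi: "(\<lambda>z. ennreal (infdist z C)) \<in> borel_measurable \<mu>"
      using mi0 measurable_cong_sets[OF smu refl] by blast
    have "(\<integral>\<^sup>+ z. ennreal (infdist z C) + ennreal e \<partial>\<mu>) = (\<integral>\<^sup>+ z. ennreal (infdist z C) \<partial>\<mu>) + (\<integral>\<^sup>+ z. ennreal e \<partial>\<mu>)"
      by (rule nn_integral_add[OF mi]) simp
    then show ?thesis using prob_space.emeasure_space_1[OF pmu] by simp
  qed
  finally show ?thesis .
qed


lemma kernel_meas:
  fixes Q :: "'y::polish_space \<Rightarrow> 'z::polish_space measure"
  assumes mk: "markov_kernel Q" and fe: "feller Q"
  shows "Q \<in> measurable borel (subprob_algebra borel)"
proof -
  have sQ: "sets (Q a) = sets borel" and pQ: "prob_space (Q a)" for a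
    using mk by (auto simp: markov_kernel_def borel_prob_def)
  have spQ: "space (Q a) = UNIV" for a using sets_eq_imp_space_eq[OF sQ[of a]] by simp
  have one: "emeasure (Q a) UNIV = 1" for a
    using prob_space.emeasure_space_1[OF pQ[of a]] spQ[of a] by simp
  have op: "(\<lambda>a. emeasure (Q a) U) \<in> borel_measurable borel" if U: "open U" for U
  proof (cases "U = UNIV")
    case True then show ?thesis using one by simp
  next
    case False
    define F where "F = - U"
    have Fc: "closed F" and Fne: "F \<noteq> {}" using U False by (auto simp: F_def)
    define f where "f n z = min 1 (real n * infdist z F)" for n :: nat and z
    have f0: "0 \<le> f n z" for n z unfolding f_def by (simp add: infdist_nonneg)
    have f1: "f n z \<le> 1" for n z unfolding f_def by simp
    have fc: "continuous_on UNIV (f n)" for n unfolding f_def by (intro continuous_intros)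
    have fb: "bounded (range (f n))" for n
      unfolding bounded_iff using f0 f1 by (intro exI[of _ 1]) auto
    have fm: "f n \<in> borel_measurable borel" for n using fc by (rule borel_measurable_continuous_onI)
    have fmQ: "f n \<in> borel_measurable (Q a)" for n a
      using fm measurable_cong_sets[OF sQ[of a] refl] by blast
    have fmQ': "(\<lambda>z. ennreal (f n z)) \<in> borel_measurable (Q a)" for n a
      using measurable_compose[OF fmQ measurable_ennreal] by (simp add: comp_def)
    have int: "(\<integral>\<^sup>+ z. ennreal (f n z) \<partial>Q a) = ennreal (\<integral> z. f n z \<partial>Q a)" for n a
    proof -
      interpret prob_space "Q a" by (rule pQ)
      have "integrable (Q a) (f n)"
        using f0 f1 fmQ by (intro integrable_const_bound[where B=1]) auto
      then show ?thesis by (rule nn_integral_eq_integral) (simp add: f0)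
    qed
    have rm[measurable]: "(\<lambda>a. \<integral> z. f n z \<partial>Q a) \<in> borel_measurable borel" for n
      using fe fc fb unfolding feller_def by (intro borel_measurable_continuous_onI) blast
    have pt: "(SUP n. ennreal (f n z)) = indicator U z" for z
    proof (cases "z \<in> U")
      case False then have "z \<in> F" by (simp add: F_def)
      then show ?thesis using False by (simp add: f_def)
    next
      case True
      then have d: "infdist z F > 0" using infdist_pos_not_in_closed[OF Fc Fne] by (simp add: F_def)
      obtain n :: nat where n: "1 / infdist z F \<le> real n" using real_arch_simple by blast
      have "real n * infdist z F \<ge> 1" using n d by (simp add: field_simps)
      then have fn: "f n z = 1" unfolding f_def by simp
      have "(SUP n. ennreal (f n z)) = 1"
      proof (rule antisym)
        show "(SUP n. ennreal (f n z)) \<le> 1" by (rule SUP_least) (simp add: f1)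
        show "1 \<le> (SUP n. ennreal (f n z))" using fn by (intro SUP_upper2[of n]) auto
      qed
      then show ?thesis using True by simp
    qed
    have inc: "incseq (\<lambda>n z. ennreal (f n z))"
      unfolding incseq_def le_fun_def f_def
      by (auto intro!: ennreal_leI min.mono mult_right_mono infdist_nonneg)
    have eq: "emeasure (Q a) U = (SUP n. \<integral>\<^sup>+ z. ennreal (f n z) \<partial>Q a)" for a
    proof -
      have Us: "U \<in> sets (Q a)" using U sQ by simp
      have "emeasure (Q a) U = (\<integral>\<^sup>+ z. indicator U z \<partial>Q a)" using Us by simp
      also have "\<dots> = (\<integral>\<^sup>+ z. (SUP n. ennreal (f n z)) \<partial>Q a)" by (simp add: pt)
      also have "\<dots> = (SUP n. \<integral>\<^sup>+ z. ennreal (f n z) \<partial>Q a)"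
        by (rule nn_integral_monotone_convergence_SUP[OF inc fmQ'])
      finally show ?thesis .
    qed
    have "(\<lambda>a. SUP n. ennreal (\<integral> z. f n z \<partial>Q a)) \<in> borel_measurable borel" by measurable
    then show ?thesis by (simp only: eq int)
  qed
  show ?thesis
  proof (rule measurable_subprob_algebra_generated[where \<Omega>=UNIV and G="{S. open S}"])
    show "sets borel = sigma_sets UNIV {S. open S}" by (rule sets_borel)
    show "Int_stable {S. open S}" by (auto simp: Int_stable_def)
    show "{S. open S} \<subseteq> Pow UNIV" by auto
    fix a :: 'y
    show "subprob_space (Q a)" using pQ[of a] by (rule prob_space_imp_subprob_space)
    show "sets (Q a) = sets borel" by (rule sQ)
  next
    show "(\<lambda>a. emeasure (Q a) UNIV) \<in> borel_measurable borel" using one by simp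
  next
    fix A :: "'z set" assume "A \<in> {S. open S}"
    then show "(\<lambda>a. emeasure (Q a) A) \<in> borel_measurable borel" using op by blast
  qed
qed

lemma kcomp_bind:
  fixes Q :: "'y::polish_space \<Rightarrow> 'z::polish_space measure"
  assumes mk: "markov_kernel Q" and Qm: "Q \<in> measurable borel (subprob_algebra borel)"
    and sP: "sets (P x) = sets borel"
  shows "kcomp Q P x = P x \<bind> Q"
proof -
  have sp: "space (P x) = UNIV" using sets_eq_imp_space_eq[OF sP] by simp
  have Qm': "Q \<in> measurable (P x) (subprob_algebra borel)"
    using Qm measurable_cong_sets[OF sP refl] by blast
  have sB: "sets (P x \<bind> Q) = sets borel"
    by (rule sets_bind[where N=borel]) (use mk sp in \<open>auto simp: markov_kernel_def borel_prob_def\<close>)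
  have spB: "space (P x \<bind> Q) = UNIV" using sets_eq_imp_space_eq[OF sB] by simp
  have "P x \<bind> Q = measure_of UNIV (sets borel) (emeasure (P x \<bind> Q))"
    using measure_of_of_measure[of "P x \<bind> Q"] sB spB by simp
  also have "\<dots> = kcomp Q P x" unfolding kcomp_def
  proof (rule measure_of_eq)
    show "sets borel \<subseteq> Pow UNIV" by simp
    fix a :: "'z set" assume "a \<in> sigma_sets UNIV (sets borel)"
    then have a: "a \<in> sets borel" by (metis sets.sigma_sets_eq space_borel)
    show "emeasure (P x \<bind> Q) a = (\<integral>\<^sup>+ y. emeasure (Q y) a \<partial>P x)"
      by (rule emeasure_bind[OF _ Qm' a]) (simp add: sp)
  qed
  finally show ?thesis by simp
qed


lemma meas_cong_borel:
  assumes "sets M = sets borel" "f \<in> borel_measurable borel"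
  shows "f \<in> borel_measurable M"
  using assms measurable_cong_sets[OF assms(1) refl] by blast

lemma W1_set_fin_nonempty:
  fixes \<mu> :: "'a::{metric_space,second_countable_topology} measure"
  assumes "W1_set \<mu> (PA A) \<le> ennreal r"
  shows "A \<noteq> {}"
proof
  assume A: "A = {}"
  have "PA A = {}"
  proof (rule ccontr)
    assume "PA A \<noteq> {}"
    then obtain \<nu> where \<nu>: "\<nu> \<in> PA A" by blast
    then have bp: "borel_prob \<nu>" and sub: "msupp \<nu> \<subseteq> A" by (auto simp: PA_def P1_def)
    interpret prob_space \<nu> using bp by (simp add: borel_prob_def)
    have "AE y in \<nu>. False" using msupp_AE[OF bp] A sub by auto
    then show False by simp
  qed
  then have "W1_set \<mu> (PA A) = \<infinity>" by (simp add: W1_set_def)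
  with assms show False by (simp add: top_unique)
qed

lemma bind_P1:
  fixes M :: "'y::polish_space measure" and Q :: "'y \<Rightarrow> 'z::polish_space measure"
  assumes M: "M \<in> P1" and mk: "markov_kernel Q" and Qm: "Q \<in> measurable borel (subprob_algebra borel)"
    and QP1: "\<forall>y. Q y \<in> P1" and L: "L \<ge> 0" and lip: "\<forall>y y'. W1 (Q y) (Q y') \<le> ennreal (L * dist y y')"
  shows "M \<bind> Q \<in> P1"
proof -
  have sM: "sets M = sets borel" and pM: "prob_space M" using M by (auto simp: P1_def borel_prob_def)
  have spM: "space M = UNIV" using sets_eq_imp_space_eq[OF sM] by simp
  have Qm': "Q \<in> measurable M (subprob_algebra borel)"
    using Qm measurable_cong_sets[OF sM refl] by blast
  have sB: "sets (M \<bind> Q) = sets borel"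
    by (rule sets_bind[where N=borel]) (use mk spM in \<open>auto simp: markov_kernel_def borel_prob_def\<close>)
  have pB: "prob_space (M \<bind> Q)"
    by (rule prob_space.prob_space_bind[OF pM _ Qm']) (use mk in \<open>auto simp: markov_kernel_def borel_prob_def\<close>)
  obtain y1 where y1: "(\<integral>\<^sup>+ y. ennreal (dist y y1) \<partial>M) < \<infinity>"
    using M by (auto simp: P1_def finite_first_moment_def)
  obtain z0 where z0: "(\<integral>\<^sup>+ z. ennreal (dist z z0) \<partial>Q y1) < \<infinity>"
    using QP1 by (auto simp: P1_def finite_first_moment_def)
  define h where "h y = (\<integral>\<^sup>+ z. ennreal (dist z z0) \<partial>Q y)" for y
  have dm: "(\<lambda>z. dist z z0) \<in> borel_measurable borel" by measurable
  have hb: "h y \<le> h y1 + ennreal L * ennreal (dist y y1)" for y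
  proof -
    have "h y \<le> h y1 + W1 (Q y) (Q y1)" unfolding h_def
      by (rule W1_lip[OF _ zero_le_dist dm]) (metis add.commute dist_triangle)
    also have "\<dots> \<le> h y1 + ennreal (L * dist y y1)" using lip by (intro add_left_mono) auto
    also have "\<dots> = h y1 + ennreal L * ennreal (dist y y1)" using L by (simp add: ennreal_mult)
    finally show ?thesis .
  qed
  have m1: "(\<lambda>z. ennreal (dist z z0)) \<in> borel_measurable borel" by measurable
  have m2[measurable]: "(\<lambda>y. ennreal (dist y y1)) \<in> borel_measurable M"
    by (rule meas_cong_borel[OF sM]) measurable
  have "(\<integral>\<^sup>+ z. ennreal (dist z z0) \<partial>(M \<bind> Q)) = (\<integral>\<^sup>+ y. h y \<partial>M)"
    unfolding h_def by (rule nn_integral_bind[OF m1 Qm'])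
  also have "\<dots> \<le> (\<integral>\<^sup>+ y. h y1 + ennreal L * ennreal (dist y y1) \<partial>M)"
    by (rule nn_integral_mono) (rule hb)
  also have "\<dots> = h y1 * emeasure M (space M) + ennreal L * (\<integral>\<^sup>+ y. ennreal (dist y y1) \<partial>M)"
    by (subst nn_integral_add) (simp_all add: nn_integral_cmult[OF m2])
  also have "\<dots> < \<infinity>"
    using y1 z0 prob_space.emeasure_space_1[OF pM] unfolding h_def
    by (simp add: ennreal_mult_less_top)
  finally have "finite_first_moment (M \<bind> Q)" unfolding finite_first_moment_def by blast
  then show ?thesis using sB pB by (simp add: P1_def borel_prob_def)
qed


theorem mainTheorem18:
  fixes P :: "'x::polish_space \<Rightarrow> 'y::polish_space measure"
    and Q :: "'y \<Rightarrow> 'z::polish_space measure"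
    and S :: "('z \<times> 'm::t2_space) set"
    and L \<delta> \<epsilon> :: real
  assumes "compact (UNIV :: 'm set)"
    and "markov_kernel P" "feller P" "tight_kernel P" "\<forall>x. P x \<in> P1"
    and "markov_kernel Q" "feller Q" "tight_kernel Q" "\<forall>y. Q y \<in> P1"
    and "L \<ge> 0"
    and "\<forall>y y'. W1 (Q y) (Q y') \<le> ennreal (L * dist y y')"
    and "\<delta> \<ge> 0" "\<epsilon> \<ge> 0"
    and "closed S"
  shows "wpullback P \<delta> (wpullback Q \<epsilon> S) \<subseteq> wpullback (kcomp Q P) (L * \<delta> + \<epsilon>) S"
proof
  fix p assume pin: "p \<in> wpullback P \<delta> (wpullback Q \<epsilon> S)"
  obtain x m where p: "p = (x, m)" by force
  define Sm where "Sm = rel_section S m"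
  define A where "A = rel_section (wpullback Q \<epsilon> S) m"
  have A_eq: "A = {y. W1_set (Q y) (PA Sm) \<le> ennreal \<epsilon>}"
    by (auto simp: A_def rel_section_def wpullback_def Sm_def)
  have h1: "W1_set (P x) (PA A) \<le> ennreal \<delta>"
    using pin p by (simp add: wpullback_def A_def)
  have Ane: "A \<noteq> {}" by (rule W1_set_fin_nonempty[OF h1])
  then obtain y1 where y1: "y1 \<in> A" by blast
  have "W1_set (Q y1) (PA Sm) \<le> ennreal \<epsilon>" using y1 A_eq by simp
  then have Smne: "Sm \<noteq> {}" by (rule W1_set_fin_nonempty)
  have "Sm = (\<lambda>z. (z, m)) -` S" by (auto simp: Sm_def rel_section_def)
  then have Smc: "closed Sm" using assms(14)
    by (simp add: continuous_closed_vimage continuous_intros)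
  have Qm: "Q \<in> measurable borel (subprob_algebra borel)" by (rule kernel_meas[OF assms(6,7)])
  have sPx: "sets (P x) = sets borel" and pPx: "prob_space (P x)"
    using assms(2) by (auto simp: markov_kernel_def borel_prob_def)
  have Qm': "Q \<in> measurable (P x) (subprob_algebra borel)"
    using Qm measurable_cong_sets[OF sPx refl] by blast
  have kc: "kcomp Q P x = P x \<bind> Q" by (rule kcomp_bind[where P=P and x=x, OF assms(6) Qm sPx])
  have kP1: "kcomp Q P x \<in> P1" unfolding kc
    by (rule bind_P1[OF _ assms(6) Qm assms(9) assms(10) assms(11)]) (use assms(5) in blast)
  define g where "g y = (\<integral>\<^sup>+ z. ennreal (infdist z Sm) \<partial>Q y)" for y
  have gA: "g y' \<le> ennreal \<epsilon>" if "y' \<in> A" for y'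
  proof -
    have "g y' \<le> W1_set (Q y') (PA Sm)" unfolding g_def by (rule W1_set_LB)
    also have "\<dots> \<le> ennreal \<epsilon>" using that A_eq by simp
    finally show ?thesis .
  qed
  have mi: "(\<lambda>z. infdist z Sm) \<in> borel_measurable borel"
    by (intro borel_measurable_continuous_onI continuous_intros)
  have glip: "g y \<le> g y' + ennreal (L * dist y y')" for y y'
  proof -
    have "g y \<le> g y' + W1 (Q y) (Q y')" unfolding g_def
      by (rule W1_lip[OF infdist_triangle infdist_nonneg mi])
    also have "\<dots> \<le> g y' + ennreal (L * dist y y')" using assms(11) by (intro add_left_mono) auto
    finally show ?thesis .
  qed
  have gbound: "g y \<le> ennreal \<epsilon> + ennreal L * ennreal (infdist y A)" for y
  proof (cases "L = 0")
    case True
    have "g y \<le> g y1 + ennreal (L * dist y y1)" by (rule glip)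
    also have "\<dots> \<le> ennreal \<epsilon>" using True gA[OF y1] by simp
    finally show ?thesis by (simp add: add_increasing2)
  next
    case False
    then have Lp: "L > 0" using assms(10) by simp
    have "g y \<le> g y1 + ennreal (L * dist y y1)" by (rule glip)
    also have "\<dots> < \<infinity>" using gA[OF y1] by (simp add: ennreal_less_top order.strict_trans1)
    finally obtain r where r: "g y = ennreal r" "r \<ge> 0"
      using ennreal_cases[of "g y"] by auto
    have "(r - \<epsilon>) / L \<le> dist y y'" if "y' \<in> A" for y'
    proof -
      have "ennreal r \<le> ennreal \<epsilon> + ennreal (L * dist y y')"
        using glip[of y y'] gA[OF that] r(1) by (metis add_right_mono order_trans)
      also have "\<dots> = ennreal (\<epsilon> + L * dist y y')" by (rule ennreal_plus[symmetric]) (use assms(10,13) in simp_all)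
      finally have le: "ennreal r \<le> ennreal (\<epsilon> + L * dist y y')" .
      have nn: "0 \<le> \<epsilon> + L * dist y y'" using assms(10,13) by simp
      have "r \<le> \<epsilon> + L * dist y y'" using ennreal_le_iff[OF nn] le by blast
      then show ?thesis using Lp by (simp add: field_simps)
    qed
    then have "(r - \<epsilon>) / L \<le> (INF y'\<in>A. dist y y')" by (intro cINF_greatest Ane) auto
    then have "(r - \<epsilon>) / L \<le> infdist y A" by (simp add: infdist_notempty[OF Ane])
    then have "r \<le> \<epsilon> + L * infdist y A" using Lp by (simp add: field_simps)
    then have "ennreal r \<le> ennreal (\<epsilon> + L * infdist y A)" by (rule ennreal_leI)
    also have "\<dots> = ennreal \<epsilon> + ennreal L * ennreal (infdist y A)"
      using assms(10,13) infdist_nonneg[of y A] by (simp add: ennreal_plus ennreal_mult)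
    finally show ?thesis using r by simp
  qed
  have m1: "(\<lambda>z. ennreal (infdist z Sm)) \<in> borel_measurable borel"
    using measurable_compose[OF mi measurable_ennreal] by (simp add: comp_def)
  have mA0: "(\<lambda>y. infdist y A) \<in> borel_measurable borel"
    by (intro borel_measurable_continuous_onI continuous_intros)
  have mA: "(\<lambda>y. ennreal (infdist y A)) \<in> borel_measurable (P x)"
    by (rule meas_cong_borel[OF sPx]) (use measurable_compose[OF mA0 measurable_ennreal] in \<open>simp add: comp_def\<close>)
  have mA2: "(\<lambda>y. ennreal L * ennreal (infdist y A)) \<in> borel_measurable (P x)"
    using mA by measurable
  have "(\<integral>\<^sup>+ z. ennreal (infdist z Sm) \<partial>kcomp Q P x) = (\<integral>\<^sup>+ y. g y \<partial>P x)"
    unfolding kc g_def by (rule nn_integral_bind[OF m1 Qm'])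
  also have "\<dots> \<le> (\<integral>\<^sup>+ y. ennreal \<epsilon> + ennreal L * ennreal (infdist y A) \<partial>P x)"
    by (rule nn_integral_mono) (rule gbound)
  also have "\<dots> = ennreal \<epsilon> + ennreal L * (\<integral>\<^sup>+ y. ennreal (infdist y A) \<partial>P x)"
    using prob_space.emeasure_space_1[OF pPx]
    by (simp add: nn_integral_add[OF _ mA2] nn_integral_cmult[OF mA])
  also have "\<dots> \<le> ennreal \<epsilon> + ennreal L * ennreal \<delta>"
    using W1_set_LB[where A=A and \<mu>="P x"] h1 by (intro add_left_mono mult_left_mono) auto
  also have "\<dots> = ennreal (L * \<delta> + \<epsilon>)"
    using assms(10,12,13) by (simp add: ennreal_plus ennreal_mult add.commute)
  finally have key: "(\<integral>\<^sup>+ z. ennreal (infdist z Sm) \<partial>kcomp Q P x) \<le> ennreal (L * \<delta> + \<epsilon>)" .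
  have "W1_set (kcomp Q P x) (PA Sm) \<le> ennreal (L * \<delta> + \<epsilon>)"
  proof (rule ennreal_le_epsilon)
    fix e :: real assume e: "0 < e"
    have "W1_set (kcomp Q P x) (PA Sm) \<le> (\<integral>\<^sup>+ z. ennreal (infdist z Sm) \<partial>kcomp Q P x) + ennreal e"
      by (rule W1_UB[OF kP1 Smc Smne e])
    also have "\<dots> \<le> ennreal (L * \<delta> + \<epsilon>) + ennreal e" using key by (rule add_right_mono)
    finally show "W1_set (kcomp Q P x) (PA Sm) \<le> ennreal (L * \<delta> + \<epsilon>) + ennreal e" .
  qed
  then show "p \<in> wpullback (kcomp Q P) (L * \<delta> + \<epsilon>) S"
    unfolding p wpullback_def Sm_def by simp
qed

end
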